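(* The modulus multifunction $\mathrm{mod}\colon C([0,1])\rightrightarrows\mathbb N^{\mathbb N}$, which assigns to $f$ the set of all moduli of continuity of $f$, is not computable in polynomial time on the parametrised space $C(I)_i$ of interval functions.
   Context: Fix a finite non-empty alphabet $\Sigma$ and Baire space $\mathcal B=\Sigma^{*\Sigma^*}$. Oracle machines $M^?$ query an oracle $\varphi\in\mathcal B$ (a query costs one step); $M^\varphi(\mathbf a)$ is the output, $\mathrm{Time}_{M^?}(\varphi,\mathbf a)$ the step count. The size of $\varphi$ is $|\varphi|(n)=\max_{|\mathbf a|\le n}|\varphi(\mathbf a)|$. Second-order polynomials: smallest class of functions $\mathbb N^{\mathbb N}\times\mathbb N\to\mathbb N$ containing $(l,n)\mapsto p(n)$ for $p\in\mathbb N[X]$, closed under $P\mapsto((l,n)\mapsto l(P(l,n)))$, pointwise sum and product. For a partial surjection $\xi\colon\subseteq\mathcal B\to X$ and $\mu\colon\mathrm{dom}(\xi)\to\mathbb N^{\mathbb N}$ with non-decreasing values, $(X,\xi,\mu)$ is a preparametrised space. A multifunction $f\colon X\rightrightarrows Y$ between such spaces is computable in polynomial time if some oracle machine $M^?$ and second-order polynomials $P,Q$ satisfy for all $\varphi\in\mathrm{dom}(\xi_X)$: $M^\varphi$ total with $\xi_Y(M^\varphi)\in f(\xi_X(\varphi))$, $\mathrm{Time}_{M^?}(\varphi,\mathbf a)\le P(\mu_X(\varphi),|\mathbf a|)$, $\mu_Y(M^\varphi)(n)\le Q(\mu_X(\varphi),n)$. Here $\mathbb N^{\mathbb N}$ carries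 the total representation $\xi(\varphi)(n)=|\varphi(\mathtt1^n)|$ with the standard parameter (the size function). A function $\nu\colon\mathbb N\to\mathbb N$ is a modulus of continuity of $f\in C([0,1])$ if $|x-y|\le2^{-\nu(n)}$ implies $|f(x)-f(y)|\le2^{-n}$ for all $x,y\in[0,1]$, $n\in\mathbb N$. Encodings: integers in binary with sign bit; dyadic rationals $\mathbb D$ by finite binary expansion; pairs via a fixed pairing. $\mathrm I\mathbb D$: finite dyadic intervals $[r\pm\varepsilon]=[r-\varepsilon,r+\varepsilon]$ (pair of codes) and $[-\infty,\infty]$; $\mathrm{diam}([r\pm\varepsilon])=2\varepsilon$. A $\xi_{\mathbb R_i}$-name of $x$ is $\varphi\colon\mathbb N\to\mathrm I\mathbb D$ with $(\varphi(n))_n$ nested and $\bigcap_n\varphi(n)=\{x\}$. $C(I)_i=(C([0,1]),\xi_{if},\mu_{if})$: $\psi\colon\mathrm I\mathbb D\to\mathrm I\mathbb D$ is a name of $f$ iff for every $\xi_{\mathbb R_i}$-name $\varphi$ of some $x\in[0,1]$, $\psi\circ\varphi$ is a $\xi_{\mathbb R_i}$-name of $f(x)$; $\mu_{if}(\psi)(n)=\lceil\mathrm{lb}(\|f\|_\infty+1)\rceil+\min\{N\mid\forall J\in\mathrm I\mathbb D:\mathrm{diam}(J)\le2^{-N}\Rightarrow\mathrm{diam}(\psi(J))\le2^{-n}\}$. *)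

theory Defs
  imports Complex_Main "HOL-Computational_Algebra.Polynomial" "HOL-Library.Extended_Real"
begin

text \<open>Alphabet Sigma = bool (True plays the role of the symbol 1, False of 0).\<close>

type_synonym word = "bool list"
type_synonym baire = "word \<Rightarrow> word"

text \<open>Tape symbols are bool option (None = blank).
  States are 0 ..< nstates; 0 = start, 1 = halt, 2 = query, 3 = state entered after a query.
  Tape 0 initially holds the input and holds the output when the machine halts; tape 1 is
  the oracle (query/answer) tape. In the query state, the word written on tape 1 (from cell 0 up
  to the first blank) is replaced by the oracle answer, the head of tape 1 is reset to cell 0,
  and the machine enters state 3; this costs one step.\<close>

record otm =
  ntapes :: nat
  nstates :: nat
  delta :: "nat \<Rightarrow> bool option list \<Rightarrow> nat \<times> bool option list \<times> int list"

definition wf_otm :: "otm \<Rightarrow> bool" where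
  "wf_otm M \<longleftrightarrow> ntapes M \<ge> 2 \<and> nstates M \<ge> 4 \<and>
     (\<forall>q < nstates M. \<forall>syms. length syms = ntapes M \<longrightarrow>
        (case delta M q syms of (q', ws, mv) \<Rightarrow>
           q' < nstates M \<and> length ws = ntapes M \<and> length mv = ntapes M \<and>
           (\<forall>m \<in> set mv. m \<in> {-1, 0, 1})))"

type_synonym tape = "int \<Rightarrow> bool option"
type_synonym config = "nat \<times> (nat \<Rightarrow> tape) \<times> (nat \<Rightarrow> int)"

definition read_word :: "tape \<Rightarrow> word" where
  "read_word t = map (\<lambda>i. the (t (int i))) [0..<(LEAST k::nat. t (int k) = None)]"

definition write_word :: "word \<Rightarrow> tape" where
  "write_word w = (\<lambda>i. if 0 \<le> i \<and> nat i < length w then Some (w ! nat i) else None)"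

definition otm_step :: "otm \<Rightarrow> baire \<Rightarrow> config \<Rightarrow> config" where
  "otm_step M \<phi> c = (case c of (q, tp, hs) \<Rightarrow>
     if q = 1 then c
     else if q = 2 then (3, tp(1 := write_word (\<phi> (read_word (tp 1)))), hs(1 := 0))
     else (case delta M q (map (\<lambda>i. tp i (hs i)) [0..<ntapes M]) of (q', ws, mv) \<Rightarrow>
       (q', (\<lambda>i. if i < ntapes M then (tp i)(hs i := ws ! i) else tp i),
            (\<lambda>i. if i < ntapes M then hs i + mv ! i else hs i))))"

definition otm_init :: "word \<Rightarrow> config" where
  "otm_init a = (0, (\<lambda>i. if i = 0 then write_word a else (\<lambda>_. None)), (\<lambda>_. 0))"

definition otm_run :: "otm \<Rightarrow> baire \<Rightarrow> word \<Rightarrow> nat \<Rightarrow> config" where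
  "otm_run M \<phi> a t = (otm_step M \<phi> ^^ t) (otm_init a)"

definition otm_halts :: "otm \<Rightarrow> baire \<Rightarrow> word \<Rightarrow> bool" where
  "otm_halts M \<phi> a \<longleftrightarrow> (\<exists>t. fst (otm_run M \<phi> a t) = 1)"

definition otm_time :: "otm \<Rightarrow> baire \<Rightarrow> word \<Rightarrow> nat" where
  "otm_time M \<phi> a = (LEAST t. fst (otm_run M \<phi> a t) = 1)"

definition otm_out :: "otm \<Rightarrow> baire \<Rightarrow> baire" where
  "otm_out M \<phi> a = read_word (fst (snd (otm_run M \<phi> a (otm_time M \<phi> a))) 0)"

inductive_set sopoly :: "((nat \<Rightarrow> nat) \<Rightarrow> nat \<Rightarrow> nat) set" where
  const_poly: "(\<lambda>l n. poly (p :: nat poly) n) \<in> sopoly"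
| apply_fn: "P \<in> sopoly \<Longrightarrow> (\<lambda>l n. l (P l n)) \<in> sopoly"
| plus: "P \<in> sopoly \<Longrightarrow> Q \<in> sopoly \<Longrightarrow> (\<lambda>l n. P l n + Q l n) \<in> sopoly"
| times: "P \<in> sopoly \<Longrightarrow> Q \<in> sopoly \<Longrightarrow> (\<lambda>l n. P l n * Q l n) \<in> sopoly"

text \<open>Representations are given as relations xi phi x ("phi is a name of x");
  the domain of xi is the set of phi having some x. Parameters mu :: baire => nat => nat.\<close>

definition poly_time_computable ::
  "(baire \<Rightarrow> 'x \<Rightarrow> bool) \<Rightarrow> (baire \<Rightarrow> nat \<Rightarrow> nat) \<Rightarrow>
   (baire \<Rightarrow> 'y \<Rightarrow> bool) \<Rightarrow> (baire \<Rightarrow> nat \<Rightarrow> nat) \<Rightarrow> ('x \<Rightarrow> 'y set) \<Rightarrow> bool" where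
  "poly_time_computable \<xi>X \<mu>X \<xi>Y \<mu>Y F \<longleftrightarrow>
     (\<exists>M P Q. wf_otm M \<and> P \<in> sopoly \<and> Q \<in> sopoly \<and>
        (\<forall>\<phi> x. \<xi>X \<phi> x \<longrightarrow>
           (\<forall>a. otm_halts M \<phi> a) \<and>
           (\<exists>y. \<xi>Y (otm_out M \<phi>) y \<and> y \<in> F x) \<and>
           (\<forall>a. otm_time M \<phi> a \<le> P (\<mu>X \<phi>) (length a)) \<and>
           (\<forall>n. \<mu>Y (otm_out M \<phi>) n \<le> Q (\<mu>X \<phi>) n)))"

definition xi_NN :: "baire \<Rightarrow> (nat \<Rightarrow> nat) \<Rightarrow> bool" where
  "xi_NN \<phi> g \<longleftrightarrow> g = (\<lambda>n. length (\<phi> (replicate n True)))"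

definition size_fn :: "baire \<Rightarrow> nat \<Rightarrow> nat" where
  "size_fn \<phi> n = Max {length (\<phi> a) | a. length a \<le> n}"

text \<open>Naturals in binary (least significant bit first, leading zeros allowed).\<close>
fun nat_of_bits :: "word \<Rightarrow> nat" where
  "nat_of_bits [] = 0"
| "nat_of_bits (b # bs) = (if b then 1 else 0) + 2 * nat_of_bits bs"

text \<open>Integers: sign bit (True = negative) followed by the binary digits of the absolute value.\<close>
fun dec_int :: "word \<Rightarrow> int option" where
  "dec_int [] = None"
| "dec_int (s # bs) = Some ((if s then -1 else 1) * int (nat_of_bits bs))"

text \<open>Pairing: <u,v> = u with each bit doubled, then the separator False True, then v.\<close>
fun unpair :: "word \<Rightarrow> (word \<times> word) option" where
  "unpair (a # b # rest) =
     (if a = b then map_option (\<lambda>(u, v). (a # u, v)) (unpair rest)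
      else if \<not> a \<and> b then Some ([], rest) else None)"
| "unpair _ = None"

text \<open>Dyadic rationals: <m, k> with m an integer code and k a natural code denotes m * 2^-k.\<close>
definition dec_dyadic :: "word \<Rightarrow> real option" where
  "dec_dyadic w = (case unpair w of None \<Rightarrow> None
     | Some (u, v) \<Rightarrow> map_option (\<lambda>m. of_int m / 2 ^ nat_of_bits v) (dec_int u))"

datatype ival = IFin real real | IInf

text \<open>Dyadic intervals: True followed by <code r, code eps> for [r +- eps] (eps >= 0);
  the word [False] encodes [-infinity, infinity].\<close>
fun dec_ival :: "word \<Rightarrow> ival option" where
  "dec_ival [] = None"
| "dec_ival (b # w) =
     (if b then (case unpair w of None \<Rightarrow> None
        | Some (u, v) \<Rightarrow> (case (dec_dyadic u, dec_dyadic v) of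
             (Some r, Some e) \<Rightarrow> if e \<ge> 0 then Some (IFin r e) else None
           | _ \<Rightarrow> None))
      else if w = [] then Some IInf else None)"

fun ival_set :: "ival \<Rightarrow> real set" where
  "ival_set (IFin r e) = {r - e .. r + e}"
| "ival_set IInf = UNIV"

fun ival_diam :: "ival \<Rightarrow> ereal" where
  "ival_diam (IFin r e) = ereal (2 * e)"
| "ival_diam IInf = \<infinity>"

text \<open>A name phi : N -> ID of x, given as the sequence of codes n |-> phi(n).\<close>
definition rname :: "(nat \<Rightarrow> word) \<Rightarrow> real \<Rightarrow> bool" where
  "rname s x \<longleftrightarrow> (\<forall>n. dec_ival (s n) \<noteq> None) \<and>
     (\<forall>n. ival_set (the (dec_ival (s (Suc n)))) \<subseteq> ival_set (the (dec_ival (s n)))) \<and>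
     (\<Inter>n. ival_set (the (dec_ival (s n)))) = {x}"

definition fname :: "baire \<Rightarrow> (real \<Rightarrow> real) \<Rightarrow> bool" where
  "fname \<psi> f \<longleftrightarrow> (\<forall>s x. x \<in> {0..1} \<and> rname s x \<longrightarrow> rname (\<psi> \<circ> s) (f x))"

text \<open>Diameter of the interval coded by an output word (non-codes count as infinite).\<close>
definition out_diam :: "word \<Rightarrow> ereal" where
  "out_diam w = (case dec_ival w of Some J \<Rightarrow> ival_diam J | None \<Rightarrow> \<infinity>)"

definition modset :: "baire \<Rightarrow> nat \<Rightarrow> nat set" where
  "modset \<psi> n = {N. \<forall>w J. dec_ival w = Some J \<and> ival_diam J \<le> ereal ((1/2) ^ N)
                     \<longrightarrow> out_diam (\<psi> w) \<le> ereal ((1/2) ^ n)}"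

definition xi_if :: "baire \<Rightarrow> (real \<Rightarrow> real) \<Rightarrow> bool" where
  "xi_if \<psi> f \<longleftrightarrow> continuous_on {0..1} f \<and> fname \<psi> f \<and> (\<forall>n. modset \<psi> n \<noteq> {})"

definition sup_norm01 :: "(real \<Rightarrow> real) \<Rightarrow> real" where
  "sup_norm01 f = Sup ((\<lambda>x. \<bar>f x\<bar>) ` {0..1})"

definition mu_if :: "baire \<Rightarrow> nat \<Rightarrow> nat" where
  "mu_if \<psi> n = nat \<lceil>log 2 (sup_norm01 (SOME f. xi_if \<psi> f) + 1)\<rceil> + (LEAST N. N \<in> modset \<psi> n)"

definition moduli :: "(real \<Rightarrow> real) \<Rightarrow> (nat \<Rightarrow> nat) set" where
  "moduli f = {\<nu>. \<forall>n x y. x \<in> {0..1} \<and> y \<in> {0..1} \<and> \<bar>x - y\<bar> \<le> (1/2) ^ \<nu> n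
                     \<longrightarrow> \<bar>f x - f y\<bar> \<le> (1/2) ^ n}"

end

theory Submission
  imports Defs "HOL-Real_Asymp.Real_Asymp"
begin


fun nenc :: "nat \<Rightarrow> word" where
  "nenc n = (if n = 0 then [] else odd n # nenc (n div 2))"

declare nenc.simps[simp del]

lemma nat_of_bits_nenc: "nat_of_bits (nenc n) = n"
proof (induction n rule: less_induct)
  case (less n)
  show ?case
  proof (cases "n = 0")
    case True then show ?thesis by (simp add: nenc.simps)
  next
    case False
    then have "nat_of_bits (nenc (n div 2)) = n div 2" using less by simp
    then show ?thesis using False by (subst nenc.simps) auto
  qed
qed

definition ienc :: "int \<Rightarrow> word" where
  "ienc m = (m < 0) # nenc (nat \<bar>m\<bar>)"

lemma dec_int_ienc: "dec_int (ienc m) = Some m"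
  by (simp add: ienc_def nat_of_bits_nenc)

definition penc :: "word \<Rightarrow> word \<Rightarrow> word" where
  "penc u v = concat (map (\<lambda>b. [b, b]) u) @ [False, True] @ v"

lemma unpair_penc: "unpair (penc u v) = Some (u, v)"
  by (induction u) (auto simp: penc_def)

definition dy :: "real \<Rightarrow> bool" where
  "dy x \<longleftrightarrow> (\<exists>m::int. \<exists>k::nat. x = m / 2 ^ k)"

lemma dec_dyadic_penc: "dec_dyadic (penc (ienc m) (nenc k)) = Some (of_int m / 2 ^ k)"
  by (simp add: dec_dyadic_def unpair_penc dec_int_ienc nat_of_bits_nenc)

lemma dy_code: assumes "dy x" shows "\<exists>w. dec_dyadic w = Some x"
  using assms dec_dyadic_penc unfolding dy_def by metis

lemma ival_code:
  assumes "dy c" "dy r" "r \<ge> 0"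
  shows "\<exists>w. dec_ival w = Some (IFin c r)"
proof -
  obtain u where u: "dec_dyadic u = Some c" using dy_code assms by blast
  obtain v where v: "dec_dyadic v = Some r" using dy_code assms by blast
  have "dec_ival (True # penc u v) = Some (IFin c r)"
    using u v assms by (simp add: unpair_penc)
  then show ?thesis by blast
qed

lemma dec_dyadic_dy: "dec_dyadic u = Some x \<Longrightarrow> dy x"
  unfolding dec_dyadic_def dy_def
  by (auto split: option.splits)

lemma dec_ival_IFin:
  assumes "dec_ival w = Some (IFin r e)"
  shows "dy r \<and> dy e \<and> e \<ge> 0"
proof (cases w)
  case Nil then show ?thesis using assms by simp
next
  case (Cons b w')
  show ?thesis
  proof (cases b)
    case True
    then obtain u v where uv: "unpair w' = Some (u, v)"
      using assms Cons by (auto split: option.splits)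
    then have "(case (dec_dyadic u, dec_dyadic v) of
             (Some r, Some e) \<Rightarrow> if e \<ge> 0 then Some (IFin r e) else None
           | _ \<Rightarrow> None) = Some (IFin r e)"
      using assms Cons True by simp
    then obtain r' e' where "dec_dyadic u = Some r'" "dec_dyadic v = Some e'" "e' \<ge> 0" "r' = r" "e' = e"
      by (auto split: option.splits if_splits)
    then show ?thesis using dec_dyadic_dy by blast
  next
    case False
    then show ?thesis using assms Cons by (auto split: if_splits)
  qed
qed

lemma dec_ival_False: "dec_ival [False] = Some IInf" by simp

lemma dy_int: "dy (of_int m)"
  unfolding dy_def by (rule exI[of _ m], rule exI[of _ 0]) simp

lemma dy_0: "dy 0" using dy_int[of 0] by simp

lemma dy_add: assumes "dy x" "dy y" shows "dy (x + y)"
proof -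
  obtain m :: int and k :: nat where x: "x = m / 2^k" using assms unfolding dy_def by blast
  obtain m' :: int and k' :: nat where y: "y = m' / 2^k'" using assms unfolding dy_def by blast
  have "x + y = of_int (m * 2^k' + m' * 2^k) / 2^(k+k')"
    by (simp add: x y field_simps power_add)
  then show ?thesis unfolding dy_def by blast
qed

lemma dy_mult: assumes "dy x" "dy y" shows "dy (x * y)"
proof -
  obtain m :: int and k :: nat where x: "x = m / 2^k" using assms unfolding dy_def by blast
  obtain m' :: int and k' :: nat where y: "y = m' / 2^k'" using assms unfolding dy_def by blast
  have "x * y = of_int (m * m') / 2^(k+k')"
    by (simp add: x y field_simps power_add)
  then show ?thesis unfolding dy_def by blast
qed

lemma dy_uminus: assumes "dy x" shows "dy (- x)"
  using dy_mult[OF dy_int[of "-1"] assms] by simp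

lemma dy_diff: "dy x \<Longrightarrow> dy y \<Longrightarrow> dy (x - y)"
  using dy_add dy_uminus by (metis uminus_add_conv_diff add.commute diff_conv_add_uminus)

lemma dy_min: "dy x \<Longrightarrow> dy y \<Longrightarrow> dy (min x y)" by (simp add: min_def)
lemma dy_max: "dy x \<Longrightarrow> dy y \<Longrightarrow> dy (max x y)" by (simp add: max_def)
lemma dy_abs: "dy x \<Longrightarrow> dy \<bar>x\<bar>" by (simp add: abs_if dy_uminus)

lemma dy_half: assumes "dy x" shows "dy (x / 2)"
proof -
  obtain m :: int and k :: nat where x: "x = m / 2^k" using assms unfolding dy_def by blast
  have "x / 2 = of_int m / 2^(Suc k)" by (simp add: x)
  then show ?thesis unfolding dy_def by blast
qed

lemma dy_inv_pow: "dy ((1/2)^k)"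
  unfolding dy_def by (rule exI[of _ 1], rule exI[of _ k]) (simp add: power_one_over)

lemma dy_pow: "dy (2^k)"
  unfolding dy_def by (rule exI[of _ "2^k"], rule exI[of _ 0]) simp

lemma dy_of_nat: "dy (real n)"
  using dy_int[of "int n"] by simp



definition tent :: "real \<Rightarrow> real \<Rightarrow> real \<Rightarrow> real \<Rightarrow> real" where
  "tent h L p x = max 0 (h - L * \<bar>x - p\<bar>)"
definition dd :: "real \<Rightarrow> real \<Rightarrow> real \<Rightarrow> real" where
  "dd p r e = max 0 (max (r - e - p) (p - r - e))"
definition lo :: "real \<Rightarrow> real \<Rightarrow> real \<Rightarrow> real \<Rightarrow> real \<Rightarrow> real" where
  "lo h L p r e = min (tent h L p (r - e)) (tent h L p (r + e))"
definition hi :: "real \<Rightarrow> real \<Rightarrow> real \<Rightarrow> real \<Rightarrow> real \<Rightarrow> real" where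
  "hi h L p r e = max 0 (h - L * dd p r e)"
definition Yf :: "real \<Rightarrow> real \<Rightarrow> real" where
  "Yf h e = (if h \<le> e then - e else h - 2 * e)"
definition lft :: "real \<Rightarrow> real \<Rightarrow> real \<Rightarrow> real \<Rightarrow> real \<Rightarrow> real" where
  "lft h L p r e = min (lo h L p r e - e) (Yf h e)"
definition rgt :: "real \<Rightarrow> real \<Rightarrow> real \<Rightarrow> real \<Rightarrow> real \<Rightarrow> real" where
  "rgt h L p r e = max (hi h L p r e) e"
definition enc :: "real \<Rightarrow> real \<Rightarrow> word" where
  "enc a b = (SOME w. dec_ival w = Some (IFin ((a + b) / 2) ((b - a) / 2)))"
definition psi :: "real \<Rightarrow> real \<Rightarrow> real \<Rightarrow> baire" where
  "psi h L p w = (case dec_ival w of Some (IFin r e) \<Rightarrow> enc (lft h L p r e) (rgt h L p r e)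
                   | _ \<Rightarrow> [False])"

lemma enc_ok:
  assumes "dy a" "dy b" "a \<le> b"
  shows "dec_ival (enc a b) = Some (IFin ((a + b) / 2) ((b - a) / 2))"
proof -
  have "\<exists>w. dec_ival w = Some (IFin ((a + b) / 2) ((b - a) / 2))"
    by (rule ival_code) (use assms in \<open>auto intro: dy_half dy_add dy_diff\<close>)
  then show ?thesis unfolding enc_def by (rule someI_ex)
qed

lemma tent_nonneg: "tent h L p x \<ge> 0" by (simp add: tent_def)
lemma tent_le: "h \<ge> 0 \<Longrightarrow> L \<ge> 0 \<Longrightarrow> tent h L p x \<le> h"
  unfolding tent_def using mult_nonneg_nonneg[of L "\<bar>x - p\<bar>"] by simp

lemma dy_tent: "dy h \<Longrightarrow> dy L \<Longrightarrow> dy p \<Longrightarrow> dy x \<Longrightarrow> dy (tent h L p x)"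
  unfolding tent_def by (intro dy_max dy_0 dy_diff dy_mult dy_abs) auto

lemma dy_lft_rgt:
  assumes "dy h" "dy L" "dy p" "dy r" "dy e"
  shows "dy (lft h L p r e)" "dy (rgt h L p r e)"
proof -
  have d2: "dy 2" using dy_int[of 2] by simp
  have "dy (r - e)" "dy (r + e)" using assms dy_diff dy_add by auto
  then have lo: "dy (lo h L p r e)" unfolding lo_def using assms dy_tent dy_min by auto
  have "dy (r - e - p)" "dy (p - r - e)" using assms dy_diff by auto
  then have "dy (dd p r e)" unfolding dd_def using dy_max dy_0 by auto
  then have hi: "dy (hi h L p r e)" unfolding hi_def using assms dy_max dy_0 dy_diff dy_mult by auto
  have Y: "dy (Yf h e)" unfolding Yf_def using assms d2 dy_uminus dy_diff dy_mult by auto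
  show "dy (lft h L p r e)" unfolding lft_def using lo Y assms dy_diff dy_min by auto
  show "dy (rgt h L p r e)" unfolding rgt_def using hi assms dy_max by auto
qed


lemma tent_anti: "L * \<bar>x - p\<bar> \<le> L * \<bar>a - p\<bar> \<Longrightarrow> tent h L p a \<le> tent h L p x"
  unfolding tent_def by (rule max.mono) simp_all

lemma tent_qc:
  assumes "a \<le> x" "x \<le> b" "L \<ge> 0"
  shows "tent h L p x \<ge> min (tent h L p a) (tent h L p b)"
proof (cases "x \<le> p")
  case True
  then have "\<bar>x - p\<bar> \<le> \<bar>a - p\<bar>" using assms by simp
  then have "tent h L p a \<le> tent h L p x" using assms(3) by (intro tent_anti mult_left_mono)
  then show ?thesis by simp
next
  case False
  then have "\<bar>x - p\<bar> \<le> \<bar>b - p\<bar>" using assms by simp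
  then have "tent h L p b \<le> tent h L p x" using assms(3) by (intro tent_anti mult_left_mono)
  then show ?thesis by simp
qed

lemma contain:
  assumes "h \<ge> 0" "L \<ge> 0" "x \<in> {r - e .. r + e}"
  shows "lft h L p r e \<le> tent h L p x \<and> tent h L p x \<le> rgt h L p r e"
proof
  have "lo h L p r e \<le> tent h L p x" unfolding lo_def
    using tent_qc[of "r - e" x "r + e" L h p] assms by auto
  moreover have "e \<ge> 0" using assms by auto
  ultimately show "lft h L p r e \<le> tent h L p x" unfolding lft_def by linarith
next
  have "\<bar>x - p\<bar> \<ge> dd p r e" unfolding dd_def using assms(3) by auto
  then have "L * \<bar>x - p\<bar> \<ge> L * dd p r e" using assms(2) by (simp add: mult_left_mono)
  then have "tent h L p x \<le> hi h L p r e" unfolding tent_def hi_def by linarith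
  then show "tent h L p x \<le> rgt h L p r e" unfolding rgt_def by linarith
qed

lemma lft_le_rgt:
  assumes "h \<ge> 0" "L \<ge> 0" "e \<ge> 0"
  shows "lft h L p r e \<le> rgt h L p r e"
  using contain[OF assms(1,2), of r r e p] assms(3) by auto

lemma mono_lr:
  assumes "h \<ge> 0" "L \<ge> 0" "e' \<ge> 0" "r - e \<le> r' - e'" "r' + e' \<le> r + e"
  shows "lft h L p r e \<le> lft h L p r' e' \<and> rgt h L p r' e' \<le> rgt h L p r e"
proof
  have ee: "e' \<le> e" using assms by linarith
  have "min (tent h L p (r - e)) (tent h L p (r + e)) \<le> tent h L p (r' - e')"
    using tent_qc[of "r - e" "r' - e'" "r + e" L h p] assms by linarith
  moreover have "min (tent h L p (r - e)) (tent h L p (r + e)) \<le> tent h L p (r' + e')"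
    using tent_qc[of "r - e" "r' + e'" "r + e" L h p] assms by linarith
  ultimately have "lo h L p r e \<le> lo h L p r' e'" unfolding lo_def by simp
  moreover have "Yf h e \<le> Yf h e'" unfolding Yf_def using ee assms by auto
  ultimately show "lft h L p r e \<le> lft h L p r' e'" unfolding lft_def using ee by linarith
next
  have ee: "e' \<le> e" using assms by linarith
  have "dd p r e \<le> dd p r' e'" unfolding dd_def using assms by auto
  then have "L * dd p r e \<le> L * dd p r' e'" using assms(2) by (simp add: mult_left_mono)
  then have "hi h L p r' e' \<le> hi h L p r e" unfolding hi_def by linarith
  then show "rgt h L p r' e' \<le> rgt h L p r e" unfolding rgt_def using ee by linarith
qed

lemma mm: "a - c \<le> B \<Longrightarrow> a - d \<le> B \<Longrightarrow> b - c \<le> B \<Longrightarrow> b - d \<le> B \<Longrightarrow> max a b - min c d \<le> (B::real)"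
  by (simp add: max_def min_def)

lemma width:
  assumes "h \<ge> 0" "L \<ge> 0" "e \<ge> 0"
  shows "rgt h L p r e - lft h L p r e \<le> (2 * L + 3) * e"
proof -
  have Le0: "0 \<le> L * e" using assms by simp
  have ab: "\<bar>r - e - p\<bar> \<le> dd p r e + 2 * e" "\<bar>r + e - p\<bar> \<le> dd p r e + 2 * e"
    unfolding dd_def using assms by auto
  have "L * \<bar>r - e - p\<bar> \<le> L * dd p r e + L * (2 * e)"
    using mult_left_mono[OF ab(1) assms(2)] by (simp add: algebra_simps)
  moreover have "L * \<bar>r + e - p\<bar> \<le> L * dd p r e + L * (2 * e)"
    using mult_left_mono[OF ab(2) assms(2)] by (simp add: algebra_simps)
  moreover have "h - L * \<bar>r - e - p\<bar> \<le> tent h L p (r - e)" "h - L * \<bar>r + e - p\<bar> \<le> tent h L p (r + e)"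
    unfolding tent_def by simp_all
  ultimately have "h - L * dd p r e - L * (2 * e) \<le> lo h L p r e" unfolding lo_def by linarith
  moreover have "0 \<le> lo h L p r e" unfolding lo_def using tent_nonneg by simp
  ultimately have hl: "hi h L p r e - lo h L p r e \<le> 2 * L * e"
    unfolding hi_def using Le0 by (cases "h - L * dd p r e \<le> 0") (simp_all add: max_def)
  have "0 \<le> L * dd p r e" using assms by (simp add: dd_def)
  then have hih: "hi h L p r e \<le> h" unfolding hi_def using assms by simp
  have lo0: "lo h L p r e \<ge> 0" unfolding lo_def using tent_nonneg by auto
  have hiY: "hi h L p r e - Yf h e \<le> 2 * e" using hih assms unfolding Yf_def by auto
  have eY: "e - Yf h e \<le> 2 * e" using assms unfolding Yf_def by auto
  have Le: "0 \<le> L * e" using assms by simp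
  have key: "max (hi h L p r e) e - min (lo h L p r e - e) (Yf h e) \<le> 2 * L * e + 3 * e"
    by (rule mm) (use hl hiY eY lo0 Le assms(3) in linarith)+
  have "(2 * L + 3) * e = 2 * L * e + 3 * e" by (simp add: algebra_simps)
  then show ?thesis unfolding rgt_def lft_def using key by linarith
qed



lemma set_fin: "ival_set (IFin ((a + b) / 2) ((b - a) / 2)) = {a..b}"
proof -
  have "(a + b) / 2 - (b - a) / 2 = a" "(a + b) / 2 + (b - a) / 2 = b" by (simp_all add: field_simps)
  then show ?thesis by simp
qed

lemma psi_fin:
  assumes P: "h \<ge> 0" "L \<ge> 0" "dy h" "dy L" "dy p" and w: "dec_ival w = Some (IFin r e)"
  shows "dec_ival (psi h L p w) = Some (IFin ((lft h L p r e + rgt h L p r e) / 2)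
                                             ((rgt h L p r e - lft h L p r e) / 2))"
proof -
  have re: "dy r" "dy e" "e \<ge> 0" using dec_ival_IFin[OF w] by auto
  have "psi h L p w = enc (lft h L p r e) (rgt h L p r e)" by (simp add: psi_def w)
  then show ?thesis
    using enc_ok[OF dy_lft_rgt[OF P(3-5) re(1,2)] lft_le_rgt[OF P(1,2) re(3)]] by simp
qed

lemma psi_nf: "\<not> (\<exists>r e. dec_ival w = Some (IFin r e)) \<Longrightarrow> psi h L p w = [False]"
  unfolding psi_def by (auto split: option.splits ival.splits)

lemma small_stage:
  assumes "rname s x" "\<epsilon> > 0"
  shows "\<exists>n r e. dec_ival (s n) = Some (IFin r e) \<and> e < \<epsilon>"
proof (rule ccontr)
  assume "\<not> ?thesis"
  then have H: "\<And>n r e. dec_ival (s n) = Some (IFin r e) \<Longrightarrow> e \<ge> \<epsilon>" by force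
  define S where "S n = ival_set (the (dec_ival (s n)))" for n
  have valid: "\<And>n. dec_ival (s n) \<noteq> None" and nest: "\<And>n. S (Suc n) \<subseteq> S n"
    and inter: "(\<Inter>n. S n) = {x}"
    using assms(1) unfolding rname_def S_def by auto
  have mono: "S m \<subseteq> S n" if "n \<le> m" for n m
    using that
  proof (induction m)
    case 0 then show ?case by simp
  next
    case (Suc m)
    then show ?case using nest[of m] by (cases "n = Suc m") auto
  qed
  have xin: "x \<in> S n" for n using inter by auto
  have dich: "x - \<epsilon> \<in> S n \<or> x + \<epsilon> \<in> S n" for n
  proof -
    obtain J where J: "dec_ival (s n) = Some J" using valid[of n] by auto
    show ?thesis
    proof (cases J)
      case IInf then show ?thesis using J by (simp add: S_def)
    next
      case (IFin r e)
      then have "e \<ge> \<epsilon>" using H J by auto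
      moreover have "x \<in> {r - e .. r + e}" using xin[of n] J IFin by (simp add: S_def)
      ultimately show ?thesis using J IFin assms(2) by (auto simp: S_def)
    qed
  qed
  show False
  proof (cases "\<forall>n. x - \<epsilon> \<in> S n")
    case True
    then have "x - \<epsilon> \<in> (\<Inter>n. S n)" by auto
    then show False using inter assms(2) by auto
  next
    case False
    then obtain n1 where n1: "x - \<epsilon> \<notin> S n1" by auto
    have "x + \<epsilon> \<in> S m" for m
    proof (cases "n1 \<le> m")
      case True
      then have "x - \<epsilon> \<notin> S m" using mono n1 by auto
      then show ?thesis using dich by auto
    next
      case False
      then have "S n1 \<subseteq> S m" using mono by auto
      then show ?thesis using dich[of n1] n1 by auto
    qed
    then have "x + \<epsilon> \<in> (\<Inter>n. S n)" by auto
    then show False using inter assms(2) by auto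
  qed
qed

lemma fname_psi:
  assumes P: "h \<ge> 0" "L \<ge> 0" "dy h" "dy L" "dy p" and s: "rname s x"
  shows "rname (psi h L p \<circ> s) (tent h L p x)"
proof -
  define S where "S n = ival_set (the (dec_ival (s n)))" for n
  define T where "T n = ival_set (the (dec_ival ((psi h L p \<circ> s) n)))" for n
  have valid: "\<And>n. dec_ival (s n) \<noteq> None" and nest: "\<And>n. S (Suc n) \<subseteq> S n"
    and inter: "(\<Inter>n. S n) = {x}"
    using s unfolding rname_def S_def by auto
  have Tfin: "T n = {lft h L p r e .. rgt h L p r e}" if "dec_ival (s n) = Some (IFin r e)" for n r e
    unfolding T_def using psi_fin[OF P that] set_fin by simp
  have Tinf: "T n = UNIV" if "\<not> (\<exists>r e. dec_ival (s n) = Some (IFin r e))" for n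
    unfolding T_def using psi_nf[OF that] by simp
  have v: "dec_ival ((psi h L p \<circ> s) n) \<noteq> None" for n
  proof (cases "\<exists>r e. dec_ival (s n) = Some (IFin r e)")
    case True then show ?thesis using psi_fin[OF P] by auto
  next
    case False then show ?thesis using psi_nf[OF False] by simp
  qed
  have nT: "T (Suc n) \<subseteq> T n" for n
  proof (cases "\<exists>r e. dec_ival (s n) = Some (IFin r e)")
    case False then show ?thesis using Tinf by auto
  next
    case True
    then obtain r e where re: "dec_ival (s n) = Some (IFin r e)" by auto
    obtain J where J: "dec_ival (s (Suc n)) = Some J" using valid[of "Suc n"] by auto
    have sub: "ival_set J \<subseteq> {r - e .. r + e}" using nest[of n] J re by (simp add: S_def)
    show ?thesis
    proof (cases J)
      case IInf
      then have "r + e + 1 \<in> {r - e .. r + e}" using sub by auto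
      then show ?thesis by simp
    next
      case (IFin r' e')
      have e': "e' \<ge> 0" using dec_ival_IFin J IFin by blast
      have "r' - e' \<in> {r - e .. r + e}" "r' + e' \<in> {r - e .. r + e}"
        using sub IFin e' by auto
      then have "r - e \<le> r' - e'" "r' + e' \<le> r + e" by auto
      from mono_lr[OF P(1,2) e' this]
      show ?thesis using Tfin re J IFin by auto
    qed
  qed
  have xin: "x \<in> S n" for n using inter by auto
  have fin: "tent h L p x \<in> T n" for n
  proof (cases "\<exists>r e. dec_ival (s n) = Some (IFin r e)")
    case False then show ?thesis using Tinf by auto
  next
    case True
    then obtain r e where re: "dec_ival (s n) = Some (IFin r e)" by auto
    have "x \<in> {r - e .. r + e}" using xin[of n] re by (simp add: S_def)
    then show ?thesis using contain[OF P(1,2)] Tfin[OF re] by auto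
  qed
  have "y = tent h L p x" if y: "y \<in> (\<Inter>n. T n)" for y
  proof (rule ccontr)
    assume ne: "y \<noteq> tent h L p x"
    define \<epsilon> where "\<epsilon> = \<bar>y - tent h L p x\<bar> / (2 * L + 4)"
    have epos: "\<epsilon> > 0" using ne P unfolding \<epsilon>_def by auto
    obtain n r e where re: "dec_ival (s n) = Some (IFin r e)" and ee: "e < \<epsilon>"
      using small_stage[OF s epos] by auto
    have e0: "e \<ge> 0" using dec_ival_IFin[OF re] by auto
    have "y \<in> T n" "tent h L p x \<in> T n" using y fin by auto
    then have "\<bar>y - tent h L p x\<bar> \<le> rgt h L p r e - lft h L p r e" using Tfin[OF re] by auto
    also have "\<dots> \<le> (2 * L + 3) * e" using width[OF P(1,2) e0] .
    also have "\<dots> \<le> (2 * L + 3) * \<epsilon>" using ee P by (intro mult_left_mono) auto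
    also have "\<dots> < (2 * L + 4) * \<epsilon>" using epos by (intro mult_strict_right_mono) auto
    also have "\<dots> = \<bar>y - tent h L p x\<bar>" unfolding \<epsilon>_def using P by simp
    finally show False by simp
  qed
  then have "(\<Inter>n. T n) = {tent h L p x}" using fin by auto
  then show ?thesis unfolding rname_def using v nT unfolding T_def by auto
qed

lemma modset_psi:
  assumes P: "h \<ge> 0" "L \<ge> 0" "dy h" "dy L" "dy p"
  shows "modset (psi h L p) n \<noteq> {}"
proof -
  have "0 < (1/2::real)^n / (L + 2)" using P by simp
  then obtain N where N: "(1/2::real)^N < (1/2)^n / (L + 2)"
    using real_arch_pow_inv[of "(1/2::real)^n / (L + 2)" "1/2"] by auto
  have "N \<in> modset (psi h L p) n"
    unfolding modset_def
  proof (intro CollectI allI impI, elim conjE)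
    fix w J assume w: "dec_ival w = Some J" and d: "ival_diam J \<le> ereal ((1 / 2) ^ N)"
    show "out_diam (psi h L p w) \<le> ereal ((1 / 2) ^ n)"
    proof (cases J)
      case IInf then show ?thesis using d by simp
    next
      case (IFin r e)
      have e0: "e \<ge> 0" using dec_ival_IFin w IFin by blast
      have de: "2 * e \<le> (1/2)^N" using d IFin by simp
      have "out_diam (psi h L p w) = ereal (rgt h L p r e - lft h L p r e)"
        unfolding out_diam_def using psi_fin[OF P] w IFin by simp
      moreover have "rgt h L p r e - lft h L p r e \<le> (1/2)^n"
      proof -
        have "rgt h L p r e - lft h L p r e \<le> (2 * L + 3) * e" using width[OF P(1,2) e0] .
        also have "\<dots> \<le> (L + 2) * (2 * e)" using e0 P by (simp add: algebra_simps)
        also have "\<dots> \<le> (L + 2) * (1/2)^N" using de P by (intro mult_left_mono) auto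
        also have "\<dots> \<le> (1/2)^n"
        proof -
          have "(1/2::real)^N * (L + 2) < (1/2)^n"
            using N P by (subst (asm) pos_less_divide_eq) auto
          then show ?thesis by (simp add: mult.commute)
        qed
        finally show ?thesis .
      qed
      ultimately show ?thesis by simp
    qed
  qed
  then show ?thesis by auto
qed

lemma xi_if_psi:
  assumes P: "h \<ge> 0" "L \<ge> 0" "dy h" "dy L" "dy p"
  shows "xi_if (psi h L p) (tent h L p)"
  unfolding xi_if_def fname_def
proof (intro conjI allI impI)
  show "continuous_on {0..1} (tent h L p)" unfolding tent_def by (intro continuous_intros)
  fix s x assume "x \<in> {0..1} \<and> rname s x"
  then show "rname (psi h L p \<circ> s) (tent h L p x)" using fname_psi[OF P] by auto
next
  fix n show "modset (psi h L p) n \<noteq> {}" using modset_psi[OF P] .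
qed



section \<open>Oracle machines: dependence on queried words only\<close>

definition qset :: "otm \<Rightarrow> baire \<Rightarrow> word \<Rightarrow> nat \<Rightarrow> word set" where
  "qset M \<phi> a T = (\<lambda>t. read_word (fst (snd (otm_run M \<phi> a t)) 1)) ` {t. t < T \<and> fst (otm_run M \<phi> a t) = 2}"

lemma run_Suc: "otm_run M \<phi> a (Suc t) = otm_step M \<phi> (otm_run M \<phi> a t)"
  unfolding otm_run_def by simp

lemma step_eq:
  assumes "fst c = 2 \<Longrightarrow> \<phi> (read_word (fst (snd c) 1)) = \<phi>' (read_word (fst (snd c) 1))"
  shows "otm_step M \<phi> c = otm_step M \<phi>' c"
proof -
  obtain q tp hs where c: "c = (q, tp, hs)" by (cases c) auto
  show ?thesis using assms unfolding c otm_step_def by auto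
qed

lemma run_eq:
  assumes "\<forall>w \<in> qset M \<phi> a T. \<phi>' w = \<phi> w"
  shows "t \<le> T \<Longrightarrow> otm_run M \<phi>' a t = otm_run M \<phi> a t"
proof (induction t)
  case 0 then show ?case by (simp add: otm_run_def)
next
  case (Suc t)
  then have IH: "otm_run M \<phi>' a t = otm_run M \<phi> a t" by simp
  have "otm_step M \<phi> (otm_run M \<phi> a t) = otm_step M \<phi>' (otm_run M \<phi> a t)"
  proof (rule step_eq)
    assume "fst (otm_run M \<phi> a t) = 2"
    then have "read_word (fst (snd (otm_run M \<phi> a t)) 1) \<in> qset M \<phi> a T"
      unfolding qset_def using Suc.prems by auto
    then show "\<phi> (read_word (fst (snd (otm_run M \<phi> a t)) 1)) = \<phi>' (read_word (fst (snd (otm_run M \<phi> a t)) 1))"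
      using assms by auto
  qed
  then show ?case using IH by (simp add: run_Suc)
qed

lemma card_qset: "card (qset M \<phi> a T) \<le> T"
proof -
  have "card (qset M \<phi> a T) \<le> card {t. t < T \<and> fst (otm_run M \<phi> a t) = 2}"
    unfolding qset_def by (rule card_image_le) simp
  also have "\<dots> \<le> card {..<T}" by (rule card_mono) auto
  finally show ?thesis by simp
qed

lemma finite_qset: "finite (qset M \<phi> a T)"
  unfolding qset_def by simp

section \<open>Second-order polynomials at a linearly bounded argument\<close>

lemma poly_bound: "poly (p :: nat poly) n \<le> (\<Sum>i\<le>degree p. coeff p i) * Suc n ^ degree p"
proof -
  have "poly p n = (\<Sum>i\<le>degree p. coeff p i * n ^ i)" by (rule poly_altdef)
  also have "\<dots> \<le> (\<Sum>i\<le>degree p. coeff p i * Suc n ^ degree p)"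
  proof (rule sum_mono)
    fix i assume "i \<in> {..degree p}"
    then have i: "i \<le> degree p" by simp
    have "n ^ i \<le> Suc n ^ i" by (rule power_mono) simp_all
    also have "\<dots> \<le> Suc n ^ degree p" using i by (rule power_increasing) simp
    finally have "n ^ i \<le> Suc n ^ degree p" .
    then show "coeff p i * n ^ i \<le> coeff p i * Suc n ^ degree p" by simp
  qed
  also have "\<dots> = (\<Sum>i\<le>degree p. coeff p i) * Suc n ^ degree p" by (simp add: sum_distrib_right)
  finally show ?thesis .
qed

lemma sopoly_bound:
  assumes "P \<in> sopoly" and lb: "\<And>m. l m \<le> C + m"
  shows "\<exists>K d. \<forall>n. P l n \<le> K * Suc n ^ d"
  using assms(1)
proof (induction rule: sopoly.induct)
  case (const_poly p)
  then show ?case using poly_bound by blast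
next
  case (apply_fn P)
  then obtain K d where Kd: "\<forall>n. P l n \<le> K * Suc n ^ d" by blast
  have "l (P l n) \<le> (C + K) * Suc n ^ d" for n
  proof -
    have "l (P l n) \<le> C + P l n" using lb .
    also have "\<dots> \<le> C + K * Suc n ^ d" using Kd by simp
    also have "\<dots> \<le> C * Suc n ^ d + K * Suc n ^ d" by simp
    finally show ?thesis by (simp add: algebra_simps)
  qed
  then show ?case by blast
next
  case (plus P Q)
  then obtain K d K' d' where Kd: "\<forall>n. P l n \<le> K * Suc n ^ d" "\<forall>n. Q l n \<le> K' * Suc n ^ d'" by blast
  have "P l n + Q l n \<le> (K + K') * Suc n ^ max d d'" for n
  proof -
    have a: "K * Suc n ^ d \<le> K * Suc n ^ max d d'"
      by (rule mult_le_mono2) (simp add: power_increasing)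
    have b: "K' * Suc n ^ d' \<le> K' * Suc n ^ max d d'"
      by (rule mult_le_mono2) (simp add: power_increasing)
    have "P l n + Q l n \<le> K * Suc n ^ max d d' + K' * Suc n ^ max d d'"
      using a b Kd[THEN spec, of n] by linarith
    then show ?thesis by (simp add: add_mult_distrib)
  qed
  then show ?case by blast
next
  case (times P Q)
  then obtain K d K' d' where Kd: "\<forall>n. P l n \<le> K * Suc n ^ d" "\<forall>n. Q l n \<le> K' * Suc n ^ d'" by blast
  have "P l n * Q l n \<le> (K * K') * Suc n ^ (d + d')" for n
  proof -
    have "P l n * Q l n \<le> (K * Suc n ^ d) * (K' * Suc n ^ d')"
      using Kd by (intro mult_le_mono) auto
    then show ?thesis by (simp add: power_add algebra_simps)
  qed
  then show ?case by blast
qed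

lemma exists_big_n: "\<exists>n\<ge>5. K * Suc n ^ d * 16 < (2::nat) ^ n"
proof -
  have "eventually (\<lambda>n::nat. real K * (real n + 1)^d * 16 < 2^n) at_top" by real_asymp
  then obtain N where N: "\<And>n. n \<ge> N \<Longrightarrow> real K * (real n + 1)^d * 16 < 2^n"
    by (auto simp: eventually_at_top_linorder)
  define n where "n = max N 5"
  have "real K * (real n + 1)^d * 16 < 2^n" using N n_def by simp
  then have "real (K * Suc n ^ d * 16) < real ((2::nat) ^ n)" by (simp add: add.commute)
  then have "K * Suc n ^ d * 16 < (2::nat) ^ n" by linarith
  moreover have "n \<ge> 5" using n_def by simp
  ultimately show ?thesis by blast
qed



lemma lr_trivial:
  assumes "h \<ge> 0" "L \<ge> 0" "e \<ge> 0"
    and c: "h \<le> e \<or> (lo h L p r e = 0 \<and> hi h L p r e = 0)"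
  shows "lft h L p r e = - e \<and> rgt h L p r e = e"
proof -
  have lo0: "lo h L p r e \<ge> 0" unfolding lo_def using tent_nonneg by simp
  have "0 \<le> L * dd p r e" using assms by (simp add: dd_def)
  then have hih: "hi h L p r e \<le> h" "hi h L p r e \<ge> 0" unfolding hi_def using assms by simp_all
  have Y: "Yf h e \<ge> - e" unfolding Yf_def by simp
  from c show ?thesis
  proof
    assume he: "h \<le> e"
    then have "Yf h e = - e" unfolding Yf_def by simp
    then show ?thesis unfolding lft_def rgt_def using lo0 hih he by simp
  next
    assume "lo h L p r e = 0 \<and> hi h L p r e = 0"
    then show ?thesis unfolding lft_def rgt_def using Y assms by simp
  qed
qed

lemma gap_lr:
  assumes "L \<ge> 0" "L * \<delta> = h" "e \<ge> 0" "\<bar>p - r\<bar> \<ge> e + \<delta>"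
  shows "lo h L p r e = 0 \<and> hi h L p r e = 0"
proof -
  have d: "dd p r e \<ge> \<delta>" unfolding dd_def using assms(4) by auto
  have a1: "\<bar>r - e - p\<bar> \<ge> \<delta>" "\<bar>r + e - p\<bar> \<ge> \<delta>" using assms(3,4) by auto
  have "L * \<delta> \<le> L * dd p r e" using d assms(1) by (rule mult_left_mono)
  then have "hi h L p r e = 0" unfolding hi_def using assms(2) by simp
  moreover have "L * \<delta> \<le> L * \<bar>r - e - p\<bar>" "L * \<delta> \<le> L * \<bar>r + e - p\<bar>"
    using a1 assms(1) by (simp_all add: mult_left_mono)
  then have "tent h L p (r - e) = 0" "tent h L p (r + e) = 0" unfolding tent_def using assms(2) by simp_all
  then have "lo h L p r e = 0" unfolding lo_def by simp
  ultimately show ?thesis by simp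
qed

lemma psi_same:
  assumes "h \<ge> 0" "L \<ge> 0"
    and c: "\<And>r e. dec_ival w = Some (IFin r e) \<Longrightarrow> h \<le> e \<or> (lo h L p r e = 0 \<and> hi h L p r e = 0)"
  shows "psi h L p w = psi 0 1 0 w"
proof (cases "\<exists>r e. dec_ival w = Some (IFin r e)")
  case True
  then obtain r e where w: "dec_ival w = Some (IFin r e)" by auto
  have e0: "e \<ge> 0" using dec_ival_IFin[OF w] by simp
  have "lft h L p r e = - e \<and> rgt h L p r e = e" using lr_trivial[OF assms(1,2) e0 c[OF w]] .
  moreover have "lft 0 1 0 r e = - e \<and> rgt 0 1 0 r e = e" using lr_trivial[of 0 1 e] e0 by simp
  ultimately show ?thesis unfolding psi_def using w by simp
next
  case False
  then show ?thesis using psi_nf[OF False] psi_nf[OF False, of 0 1 0] by simp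
qed

lemma modset_psi0: "m \<in> modset (psi 0 1 0) m"
  unfolding modset_def
proof (intro CollectI allI impI, elim conjE)
  fix w J assume w: "dec_ival w = Some J" and d: "ival_diam J \<le> ereal ((1 / 2) ^ m)"
  show "out_diam (psi 0 1 0 w) \<le> ereal ((1 / 2) ^ m)"
  proof (cases J)
    case IInf then show ?thesis using d by simp
  next
    case (IFin r e)
    have e0: "e \<ge> 0" using dec_ival_IFin w IFin by blast
    have "lft 0 1 0 r e = - e \<and> rgt 0 1 0 r e = e" using lr_trivial[of 0 1 e] e0 by simp
    then have "out_diam (psi 0 1 0 w) = ereal (2 * e)"
      unfolding out_diam_def using psi_fin[of 0 1 0 w r e] w IFin dy_0 dy_int[of 1] by simp
    then show ?thesis using d IFin by simp
  qed
qed

theorem mainTheorem18: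
  shows "\<not> poly_time_computable xi_if mu_if xi_NN size_fn moduli"
proof
  assume "poly_time_computable xi_if mu_if xi_NN size_fn moduli"
  then obtain M P Q where Pso: "P \<in> sopoly" and
    spec: "\<And>\<phi> x. xi_if \<phi> x \<Longrightarrow>
           (\<forall>a. otm_halts M \<phi> a) \<and>
           (\<exists>y. xi_NN (otm_out M \<phi>) y \<and> y \<in> moduli x) \<and>
           (\<forall>a. otm_time M \<phi> a \<le> P (mu_if \<phi>) (length a))"
    unfolding poly_time_computable_def by blast
  have dy1: "dy 1" using dy_int[of 1] by simp
  define \<psi>0 where "\<psi>0 = psi 0 1 0"
  have xi0: "xi_if \<psi>0 (tent 0 1 0)" unfolding \<psi>0_def by (rule xi_if_psi) (simp_all add: dy_0 dy1)
  define C where "C = nat \<lceil>log 2 (sup_norm01 (SOME f. xi_if \<psi>0 f) + 1)\<rceil>"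
  have mub: "mu_if \<psi>0 m \<le> C + m" for m
    unfolding mu_if_def C_def using Least_le[of "\<lambda>N. N \<in> modset \<psi>0 m" m] modset_psi0[of m]
    unfolding \<psi>0_def by simp
  obtain K d where Kd: "\<forall>n. P (mu_if \<psi>0) n \<le> K * Suc n ^ d"
    using sopoly_bound[OF Pso mub] by blast
  obtain n where n5: "n \<ge> 5" and nbig: "K * Suc n ^ d * 16 < (2::nat) ^ n"
    using exists_big_n by blast
  obtain m where nm: "n = m + 5" using n5 by (metis add.commute le_Suc_ex)
  define a where "a = replicate n True"
  define T where "T = otm_time M \<psi>0 a"
  have halts0: "otm_halts M \<psi>0 a" using spec[OF xi0] by blast
  have T1: "fst (otm_run M \<psi>0 a T) = 1"
    using halts0 unfolding otm_halts_def T_def otm_time_def by (rule LeastI_ex)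
  have Tle: "T \<le> K * Suc n ^ d"
    using spec[OF xi0] Kd unfolding T_def a_def by (metis length_replicate le_trans)
  define Wq where "Wq = qset M \<psi>0 a T"
  have cardW: "card Wq < 2 ^ (m + 1)"
  proof -
    have "card Wq \<le> K * Suc n ^ d" using card_qset[of M \<psi>0 a T] Tle unfolding Wq_def by simp
    moreover have "(2::nat) ^ n = 16 * 2 ^ (m + 1)" unfolding nm by (simp add: power_add)
    ultimately show ?thesis using nbig by linarith
  qed
  define \<nu> where "\<nu> = length (otm_out M \<psi>0 a)"
  define h :: real where "h = (1/2) ^ (m + 4)"
  define D where "D = max \<nu> (m + 4)"
  define \<delta> :: real where "\<delta> = (1/2) ^ D"
  define L :: real where "L = 2 ^ (D - (m + 4))"
  define g :: real where "g = (1/2) ^ (m + 2)"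
  define G :: nat where "G = 2 ^ (m + 1)"
  have Ld: "L * \<delta> = h"
  proof -
    have "D = (D - (m + 4)) + (m + 4)" unfolding D_def by simp
    then have "\<delta> = (1/2) ^ (D - (m + 4)) * (1/2) ^ (m + 4)" unfolding \<delta>_def by (metis power_add)
    then show ?thesis unfolding L_def h_def by (simp add: power_one_over)
  qed
  have dh: "\<delta> \<le> h" unfolding \<delta>_def h_def D_def by (rule power_decreasing) auto
  have dnu: "\<delta> \<le> (1/2) ^ \<nu>" unfolding \<delta>_def D_def by (rule power_decreasing) auto
  have dpos: "\<delta> > 0" unfolding \<delta>_def by simp
  have g4: "g = 4 * h" unfolding g_def h_def by (simp add: power_add power_one_over)
  have hpos: "h > 0" unfolding h_def by simp
  have Gg: "real G * g = 1/2" unfolding G_def g_def by (simp add: power_add power_one_over)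
  have hn: "h = 2 * (1/2) ^ n" unfolding h_def nm by (simp add: power_add power_one_over)
  define B where "B w = {i. i < G \<and> (\<exists>r e. dec_ival w = Some (IFin r e) \<and> e < h \<and>
                          \<bar>real i * g - r\<bar> < e + \<delta>)}" for w
  have cardB: "card (B w) \<le> 1" for w
  proof -
    have "finite (B w)" unfolding B_def by simp
    moreover have "i = j" if i: "i \<in> B w" and j: "j \<in> B w" for i j
    proof (rule ccontr)
      assume ij: "i \<noteq> j"
      obtain r e where w: "dec_ival w = Some (IFin r e)" and e: "e < h"
        and ri: "\<bar>real i * g - r\<bar> < e + \<delta>" using i unfolding B_def by auto
      have rj: "\<bar>real j * g - r\<bar> < e + \<delta>" using j w unfolding B_def by auto
      have "\<bar>real i * g - real j * g\<bar> < g" using ri rj e dh g4 by linarith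
      moreover have "\<bar>real i - real j\<bar> \<ge> 1" using ij by linarith
      then have "g \<le> \<bar>real i - real j\<bar> * g" using g4 hpos by simp
      then have "g \<le> \<bar>real i * g - real j * g\<bar>" using g4 hpos
        by (simp add: abs_mult left_diff_distrib[symmetric])
      ultimately show False by linarith
    qed
    ultimately show ?thesis using card_le_Suc0_iff_eq[of "B w"] by (simp add: One_nat_def)
  qed
  have "card (\<Union>w\<in>Wq. B w) \<le> (\<Sum>w\<in>Wq. card (B w))"
    by (rule card_UN_le) (simp add: Wq_def finite_qset)
  also have "\<dots> \<le> (\<Sum>w\<in>Wq. 1)" using cardB by (intro sum_mono) auto
  also have "\<dots> = card Wq" by simp
  finally have "card (\<Union>w\<in>Wq. B w) < G" using cardW unfolding G_def by linarith
  moreover have finU: "finite (\<Union>w\<in>Wq. B w)"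
    by (rule finite_UN_I) (simp_all add: Wq_def finite_qset B_def)
  ultimately have "\<not> {..<G} \<subseteq> (\<Union>w\<in>Wq. B w)"
    using card_mono[OF finU, of "{..<G}"] by auto
  then obtain i where iG: "i < G" and inB: "\<And>w. w \<in> Wq \<Longrightarrow> i \<notin> B w" by auto
  define p where "p = real i * g"
  have good: "\<bar>p - r\<bar> \<ge> e + \<delta>" if "w \<in> Wq" "dec_ival w = Some (IFin r e)" "e < h" for w r e
    using inB[OF that(1)] that(2,3) iG unfolding B_def p_def by force
  have p0: "p \<ge> 0" unfolding p_def g_def by simp
  have p1: "p + \<delta> \<le> 1"
  proof -
    have "p < real G * g" unfolding p_def using iG g4 hpos by simp
    moreover have "h \<le> (1/2) ^ 1" unfolding h_def by (rule power_decreasing) auto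
    ultimately show ?thesis using Gg dh by simp
  qed
  have L0: "L \<ge> 0" unfolding L_def by simp
  have dyP: "dy h" "dy L" "dy p" unfolding h_def L_def p_def
    by (rule dy_inv_pow, rule dy_pow, rule dy_mult[OF dy_of_nat]) (unfold g_def, rule dy_inv_pow)
  define \<psi>1 where "\<psi>1 = psi h L p"
  have xi1: "xi_if \<psi>1 (tent h L p)" unfolding \<psi>1_def
    using xi_if_psi[of h L p] hpos L0 dyP by simp
  have same: "\<forall>w\<in>Wq. \<psi>1 w = \<psi>0 w"
  proof
    fix w assume w: "w \<in> Wq"
    show "\<psi>1 w = \<psi>0 w" unfolding \<psi>1_def \<psi>0_def
    proof (rule psi_same)
      fix r e assume re: "dec_ival w = Some (IFin r e)"
      have e0: "e \<ge> 0" using dec_ival_IFin[OF re] by simp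
      show "h \<le> e \<or> (lo h L p r e = 0 \<and> hi h L p r e = 0)"
      proof (cases "h \<le> e")
        case False
        then show ?thesis using gap_lr[OF L0 Ld e0 good[OF w re]] by simp
      qed simp
    qed (use hpos L0 in auto)
  qed
  have runs: "otm_run M \<psi>1 a t = otm_run M \<psi>0 a t" if "t \<le> T" for t
    using run_eq[of M \<psi>0 a T \<psi>1] same that unfolding Wq_def by auto
  have time1: "otm_time M \<psi>1 a = T"
    unfolding otm_time_def
  proof (rule Least_equality)
    show "fst (otm_run M \<psi>1 a T) = 1" using runs T1 by simp
    fix t assume t: "fst (otm_run M \<psi>1 a t) = 1"
    show "T \<le> t"
    proof (rule ccontr)
      assume "\<not> T \<le> t"
      then have "fst (otm_run M \<psi>0 a t) = 1" using runs t by simp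
      then have "T \<le> t" unfolding T_def otm_time_def by (rule Least_le)
      with \<open>\<not> T \<le> t\<close> show False by simp
    qed
  qed
  have out1: "otm_out M \<psi>1 a = otm_out M \<psi>0 a"
    unfolding otm_out_def time1 using runs[of T] T_def by simp
  obtain y where y: "xi_NN (otm_out M \<psi>1) y" and ymod: "y \<in> moduli (tent h L p)"
    using spec[OF xi1] by blast
  have yn: "y n = \<nu>" using y out1 unfolding xi_NN_def \<nu>_def a_def by simp
  have ym: "\<And>k x x'. x \<in> {0..1} \<Longrightarrow> x' \<in> {0..1} \<Longrightarrow> \<bar>x - x'\<bar> \<le> (1/2) ^ y k
      \<Longrightarrow> \<bar>tent h L p x - tent h L p x'\<bar> \<le> (1/2) ^ k"
    using ymod unfolding moduli_def by blast
  have "p \<in> {0..1}" "p + \<delta> \<in> {0..1}" using p0 p1 dpos by auto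
  moreover have "\<bar>p - (p + \<delta>)\<bar> \<le> (1/2) ^ y n" using yn dnu dpos by simp
  ultimately have "\<bar>tent h L p p - tent h L p (p + \<delta>)\<bar> \<le> (1/2) ^ n" by (rule ym)
  moreover have "tent h L p p = h" unfolding tent_def using hpos by simp
  moreover have "tent h L p (p + \<delta>) = 0" unfolding tent_def using Ld dpos by simp
  ultimately show False using hn by simp
qed

end
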